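(* Let $\mathcal{L}$ be an intuitionistic abstract logic. For all $z,a,b\in Expr_{\mathcal{L}}$: $z\le a\to b$ if and only if $z\wedge a\le b$.
   Context: An abstract logic is a triple $\mathcal{L}=(Expr_{\mathcal{L}},Th_{\mathcal{L}},\mathcal{C}_{\mathcal{L}})$ where $Expr_{\mathcal{L}}$ is a set, $Th_{\mathcal{L}}$ a non-empty set of subsets of $Expr_{\mathcal{L}}$ (theories) closed under intersections of non-empty subfamilies, and $\mathcal{C}_{\mathcal{L}}$ a set of operations on $Expr_{\mathcal{L}}$. $\mathcal{L}$ is closed under union of chains if the union of every non-empty chain of theories is a theory. A theory $T$ is prime if $T=\bigcap\mathcal{T}$ with $\mathcal{T}\subseteq Th_{\mathcal{L}}$ non-empty finite implies $T\in\mathcal{T}$; totally prime if this holds for non-empty $\mathcal{T}$ of any size. $PTh_{\mathcal{L}}$, $TPTh_{\mathcal{L}}$ denote these sets. An intuitionistic abstract logic is one closed under union of chains with binary connectives $\vee,\wedge,\to$ and constants $\top,\bot$ such that for all $a,b$ and all $T\in TPTh_{\mathcal{L}}$: $a\vee b\in T$ iff $a\in T$ or $b\in T$; $a\wedge b\in T$ iff $a,b\in T$; $a\to b\in T$ iff for every totally prime $T'\supseteq T$, $a\in T'$ implies $b\in T'$; $\top$ lies in every theory and $\bot$ in none. The order: $a\le b$ iff $S_a\subseteq S_b$, where $S_a=\{P\in PTh_{\mathcal{L}}: a\in P\}$. *)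

theory Defs
  imports Main
begin

text \<open>Expressions are the elements of the type 'e (Expr_L); Th is the set of theories.
The operations in C_L relevant here are the connectives dis, con, imp and constants tp, bt.\<close>

definition abstract_logic :: "'e set set \<Rightarrow> bool" where
  "abstract_logic Th \<longleftrightarrow> Th \<noteq> {} \<and>
     (\<forall>F. F \<noteq> {} \<and> F \<subseteq> Th \<longrightarrow> \<Inter>F \<in> Th)"

definition closed_union_chains :: "'e set set \<Rightarrow> bool" where
  "closed_union_chains Th \<longleftrightarrow>
     (\<forall>C. C \<noteq> {} \<and> C \<subseteq> Th \<and> (\<forall>X\<in>C. \<forall>Y\<in>C. X \<subseteq> Y \<or> Y \<subseteq> X) \<longrightarrow> \<Union>C \<in> Th)"

definition prime_theory :: "'e set set \<Rightarrow> 'e set \<Rightarrow> bool" where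
  "prime_theory Th T \<longleftrightarrow> T \<in> Th \<and>
     (\<forall>F. F \<subseteq> Th \<and> F \<noteq> {} \<and> finite F \<and> T = \<Inter>F \<longrightarrow> T \<in> F)"

definition totally_prime_theory :: "'e set set \<Rightarrow> 'e set \<Rightarrow> bool" where
  "totally_prime_theory Th T \<longleftrightarrow> T \<in> Th \<and>
     (\<forall>F. F \<subseteq> Th \<and> F \<noteq> {} \<and> T = \<Inter>F \<longrightarrow> T \<in> F)"

definition intuitionistic_logic ::
  "'e set set \<Rightarrow> ('e \<Rightarrow> 'e \<Rightarrow> 'e) \<Rightarrow> ('e \<Rightarrow> 'e \<Rightarrow> 'e) \<Rightarrow> ('e \<Rightarrow> 'e \<Rightarrow> 'e) \<Rightarrow> 'e \<Rightarrow> 'e \<Rightarrow> bool"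
  where
  "intuitionistic_logic Th dis con imp tp bt \<longleftrightarrow>
     abstract_logic Th \<and> closed_union_chains Th \<and>
     (\<forall>T a b. totally_prime_theory Th T \<longrightarrow>
        (dis a b \<in> T \<longleftrightarrow> a \<in> T \<or> b \<in> T) \<and>
        (con a b \<in> T \<longleftrightarrow> a \<in> T \<and> b \<in> T) \<and>
        (imp a b \<in> T \<longleftrightarrow>
           (\<forall>T'. totally_prime_theory Th T' \<and> T \<subseteq> T' \<longrightarrow> a \<in> T' \<longrightarrow> b \<in> T'))) \<and>
     (\<forall>T\<in>Th. tp \<in> T \<and> bt \<notin> T)"

definition S_set :: "'e set set \<Rightarrow> 'e \<Rightarrow> 'e set set" where
  "S_set Th a = {P. prime_theory Th P \<and> a \<in> P}"

definition logic_le :: "'e set set \<Rightarrow> 'e \<Rightarrow> 'e \<Rightarrow> bool" where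
  "logic_le Th a b \<longleftrightarrow> S_set Th a \<subseteq> S_set Th b"

end

theory Submission
  imports Defs
begin

lemma tp_extend:
  assumes cu: "closed_union_chains Th" and P: "P \<in> Th" and a: "a \<notin> P"
  shows "\<exists>T. totally_prime_theory Th T \<and> P \<subseteq> T \<and> a \<notin> T"
proof -
  define A where "A = {T. T \<in> Th \<and> P \<subseteq> T \<and> a \<notin> T}"
  have "\<forall>C\<in>chains A. \<exists>U\<in>A. \<forall>X\<in>C. X \<subseteq> U"
  proof
    fix C assume C: "C \<in> chains A"
    show "\<exists>U\<in>A. \<forall>X\<in>C. X \<subseteq> U"
    proof (cases "C = {}")
      case True then show ?thesis using P a by (auto simp: A_def)
    next
      case False
      have "\<Union>C \<in> Th" using cu C False unfolding closed_union_chains_def chains_def chain_subset_def A_def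
        by blast
      moreover have "P \<subseteq> \<Union>C" "a \<notin> \<Union>C" using C False unfolding chains_def A_def by auto
      ultimately show ?thesis unfolding A_def by blast
    qed
  qed
  then obtain M where M: "M \<in> A" and mx: "\<forall>X\<in>A. M \<subseteq> X \<longrightarrow> X = M"
    using Zorn_Lemma2 by blast
  have "totally_prime_theory Th M"
    unfolding totally_prime_theory_def
  proof (intro conjI allI impI)
    show "M \<in> Th" using M A_def by auto
    fix F assume F: "F \<subseteq> Th \<and> F \<noteq> {} \<and> M = \<Inter>F"
    show "M \<in> F"
    proof (rule ccontr)
      assume nf: "M \<notin> F"
      have "\<forall>X\<in>F. a \<in> X"
      proof
        fix X assume X: "X \<in> F"
        have "M \<subseteq> X" using F X by blast
        moreover have "X \<noteq> M" using X nf by blast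
        ultimately have "X \<notin> A" using mx by blast
        then show "a \<in> X" using X F M unfolding A_def by blast
      qed
      then have "a \<in> M" using F by blast
      then show False using M A_def by auto
    qed
  qed
  then show ?thesis using M A_def by auto
qed

lemma le_char:
  assumes cu: "closed_union_chains Th"
  shows "logic_le Th x y \<longleftrightarrow> (\<forall>T. totally_prime_theory Th T \<longrightarrow> x \<in> T \<longrightarrow> y \<in> T)"
proof
  assume L: "logic_le Th x y"
  show "\<forall>T. totally_prime_theory Th T \<longrightarrow> x \<in> T \<longrightarrow> y \<in> T"
  proof (intro allI impI)
    fix T assume T: "totally_prime_theory Th T" and x: "x \<in> T"
    have "prime_theory Th T" using T unfolding totally_prime_theory_def prime_theory_def by blast
    then show "y \<in> T" using L x unfolding logic_le_def S_set_def by blast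
  qed
next
  assume R: "\<forall>T. totally_prime_theory Th T \<longrightarrow> x \<in> T \<longrightarrow> y \<in> T"
  show "logic_le Th x y" unfolding logic_le_def S_set_def
  proof (intro subsetI CollectI conjI)
    fix P assume P: "P \<in> {P. prime_theory Th P \<and> x \<in> P}"
    then show "prime_theory Th P" by blast
    show "y \<in> P"
    proof (rule ccontr)
      assume "y \<notin> P"
      then obtain T where "totally_prime_theory Th T" "P \<subseteq> T" "y \<notin> T"
        using tp_extend[OF cu, of P y] P unfolding prime_theory_def by blast
      then show False using R P by blast
    qed
  qed
qed

theorem lemma4p2:
  fixes Th :: "'e set set" and dis con imp :: "'e \<Rightarrow> 'e \<Rightarrow> 'e" and tp bt :: 'e
  assumes "intuitionistic_logic Th dis con imp tp bt"
  shows "logic_le Th z (imp a b) \<longleftrightarrow> logic_le Th (con z a) b"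
proof -
  have cu: "closed_union_chains Th" using assms unfolding intuitionistic_logic_def by blast
  have C: "\<And>T a b. totally_prime_theory Th T \<Longrightarrow> con a b \<in> T \<longleftrightarrow> a \<in> T \<and> b \<in> T"
    using assms unfolding intuitionistic_logic_def by blast
  have I: "\<And>T a b. totally_prime_theory Th T \<Longrightarrow> imp a b \<in> T \<longleftrightarrow>
           (\<forall>T'. totally_prime_theory Th T' \<and> T \<subseteq> T' \<longrightarrow> a \<in> T' \<longrightarrow> b \<in> T')"
    using assms unfolding intuitionistic_logic_def by blast
  show ?thesis unfolding le_char[OF cu]
  proof (intro iffI allI impI)
    fix T assume H: "\<forall>T. totally_prime_theory Th T \<longrightarrow> z \<in> T \<longrightarrow> imp a b \<in> T"
      and T: "totally_prime_theory Th T" and za: "con z a \<in> T"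
    have "z \<in> T" "a \<in> T" using C[OF T] za by auto
    then have "imp a b \<in> T" using H T by blast
    then show "b \<in> T" using I[OF T] T \<open>a \<in> T\<close> by blast
  next
    fix T assume H: "\<forall>T. totally_prime_theory Th T \<longrightarrow> con z a \<in> T \<longrightarrow> b \<in> T"
      and T: "totally_prime_theory Th T" and z: "z \<in> T"
    show "imp a b \<in> T" unfolding I[OF T]
    proof (intro allI impI)
      fix T' assume T': "totally_prime_theory Th T' \<and> T \<subseteq> T'" and a: "a \<in> T'"
      have "con z a \<in> T'" using C[of T' z a] T' z a by blast
      then show "b \<in> T'" using H T' by blast
    qed
  qed
qed

end
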